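(* Let $\Gamma_1$ and $\Gamma_2$ be two metric theories built over a finite alphabet $\mathcal{A}$. Then $\Gamma_1$ and $\Gamma_2$ are strongly equivalent if and only if $\Gamma_1$ and $\Gamma_2$ are MHT-equivalent (i.e. have exactly the same MHT models).
   Context: Write $[m,n)=\{i\in\mathbb{N}\mid m\le i<n\}$, $(m,n]=\{i\in\mathbb{N}\mid m<i\le n\}$. Metric formulas over $\mathcal{A}$: $\varphi::=p\mid\bot\mid\varphi_1\wedge\varphi_2\mid\varphi_1\vee\varphi_2\mid\varphi_1\to\varphi_2\mid\bullet_I\varphi\mid\varphi_1\mathsf{S}_I\varphi_2\mid\varphi_1\mathsf{T}_I\varphi_2\mid\circ_I\varphi\mid\varphi_1\mathsf{U}_I\varphi_2\mid\varphi_1\mathsf{R}_I\varphi_2$, $p\in\mathcal{A}$, $I=[m,n)$ with $m\in\mathbb{N}$, $n\in\mathbb{N}\cup\{\omega\}$; a metric theory is a (possibly infinite) set of metric formulas. A timed HT-trace of length $\lambda\in\mathbb{N}\cup\{\omega\}$ is $\mathbf{M}=(\langle\mathbf{H},\mathbf{T}\rangle,\tau)$ with $H_i\subseteq T_i\subseteq\mathcal{A}$ for $i\in[0,\lambda)$ and $\tau:[0,\lambda)\to\mathbb{N}$, $\tau(0)=0$, $\tau(i)\le\tau(i+1)$. Standing assumption: all timed traces are strict, i.e. $\tau(i)<\tau(i+1)$ whenever $i+1<\lambda$. Satisfaction at $k\in[0,\lambda)$: $\bot$ never; $p$ iff $p\in H_k$; $\wedge,\vee$ as usual; $\varphi\to\psi$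 iff for both $\mathbf{M}'=\mathbf{M}$ and $\mathbf{M}'=(\langle\mathbf{T},\mathbf{T}\rangle,\tau)$, $\mathbf{M}',k\not\models\varphi$ or $\mathbf{M}',k\models\psi$; $\bullet_I\varphi$ iff $k>0$, $\mathbf{M},k-1\models\varphi$, $\tau(k)-\tau(k-1)\in I$; $\varphi\mathsf{S}_I\psi$ iff for some $j\in[0,k]$ with $\tau(k)-\tau(j)\in I$, $\mathbf{M},j\models\psi$ and $\mathbf{M},i\models\varphi$ for all $i\in(j,k]$; $\varphi\mathsf{T}_I\psi$ iff for all $j\in[0,k]$ with $\tau(k)-\tau(j)\in I$, $\mathbf{M},j\models\psi$ or $\mathbf{M},i\models\varphi$ for some $i\in(j,k]$; $\circ_I\varphi$ iff $k+1<\lambda$, $\mathbf{M},k+1\models\varphi$, $\tau(k+1)-\tau(k)\in I$; $\varphi\mathsf{U}_I\psi$ iff for some $j\in[k,\lambda)$ with $\tau(j)-\tau(k)\in I$, $\mathbf{M},j\models\psi$ and $\mathbf{M},i\models\varphi$ for all $i\in[k,j)$; $\varphi\mathsf{R}_I\psi$ iff for all $j\in[k,\lambda)$ with $\tau(j)-\tau(k)\in I$, $\mathbf{M},j\models\psi$ or $\mathbf{M},i\models\varphi$ for some $i\in[k,j)$. An MHT model of a theory $\Gamma$ is a timed HT-trace $\mathbf{M}$ (of any length) with $\mathbf{M},0\models\varphi$ for all $\varphi\in\Gamma$; $\mathrm{MHT}(\Gamma)$ is the set of them. A total trace $(\langle\mathbf{T},\mathbf{T}\rangle,\tau)\in\mathrm{MHT}(\Gamma)$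 is a metric equilibrium model of $\Gamma$ if there is no $\mathbf{H}<\mathbf{T}$ (i.e. $H_i\subseteq T_i$ for all $i$ and $\mathbf{H}\neq\mathbf{T}$) with $(\langle\mathbf{H},\mathbf{T}\rangle,\tau)\in\mathrm{MHT}(\Gamma)$; $\mathrm{MEL}(\Gamma)$ denotes the set of these. $\Gamma_1,\Gamma_2$ are strongly equivalent if $\mathrm{MEL}(\Gamma_1\cup\Delta)=\mathrm{MEL}(\Gamma_2\cup\Delta)$ for every metric theory $\Delta$. *)

theory Defs
  imports Main "HOL-Library.Extended_Nat"
begin

text \<open>Intervals [m,n) with m a natural number and n in nat extended by omega.\<close>
type_synonym interval = "nat \<times> enat"

definition in_int :: "nat \<Rightarrow> interval \<Rightarrow> bool" where
  "in_int d I \<longleftrightarrow> fst I \<le> d \<and> enat d < snd I"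

datatype 'a mformula =
    Atom 'a
  | Bot
  | And "'a mformula" "'a mformula"
  | Or "'a mformula" "'a mformula"
  | Impl "'a mformula" "'a mformula"
  | Prev interval "'a mformula"
  | Since interval "'a mformula" "'a mformula"
  | Trigger interval "'a mformula" "'a mformula"
  | Next interval "'a mformula"
  | Until interval "'a mformula" "'a mformula"
  | Release interval "'a mformula" "'a mformula"

text \<open>A timed HT-trace: length lambda, here-component H, there-component T, timing tau.
  Only the values at positions i < lambda are meaningful.\<close>
datatype 'a htrace = HTrace (len: enat) (hh: "nat \<Rightarrow> 'a set") (tt: "nat \<Rightarrow> 'a set") (tau: "nat \<Rightarrow> nat")

definition wf_trace :: "'a htrace \<Rightarrow> bool" where
  "wf_trace M \<longleftrightarrow> 0 < len M \<and> (\<forall>i. enat i < len M \<longrightarrow> hh M i \<subseteq> tt M i)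
     \<and> tau M 0 = 0 \<and> (\<forall>i. enat (Suc i) < len M \<longrightarrow> tau M i < tau M (Suc i))"

primrec sat :: "enat \<Rightarrow> (nat \<Rightarrow> 'a set) \<Rightarrow> (nat \<Rightarrow> 'a set) \<Rightarrow> (nat \<Rightarrow> nat) \<Rightarrow> nat \<Rightarrow> 'a mformula \<Rightarrow> bool" where
  "sat l H T t k (Atom p) \<longleftrightarrow> p \<in> H k"
| "sat l H T t k Bot \<longleftrightarrow> False"
| "sat l H T t k (And f g) \<longleftrightarrow> sat l H T t k f \<and> sat l H T t k g"
| "sat l H T t k (Or f g) \<longleftrightarrow> sat l H T t k f \<or> sat l H T t k g"
| "sat l H T t k (Impl f g) \<longleftrightarrow> (sat l H T t k f \<longrightarrow> sat l H T t k g) \<and> (sat l T T t k f \<longrightarrow> sat l T T t k g)"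
| "sat l H T t k (Prev I f) \<longleftrightarrow> 0 < k \<and> sat l H T t (k - 1) f \<and> in_int (t k - t (k - 1)) I"
| "sat l H T t k (Since I f g) \<longleftrightarrow> (\<exists>j\<le>k. in_int (t k - t j) I \<and> sat l H T t j g \<and> (\<forall>i. j < i \<and> i \<le> k \<longrightarrow> sat l H T t i f))"
| "sat l H T t k (Trigger I f g) \<longleftrightarrow> (\<forall>j\<le>k. in_int (t k - t j) I \<longrightarrow> sat l H T t j g \<or> (\<exists>i. j < i \<and> i \<le> k \<and> sat l H T t i f))"
| "sat l H T t k (Next I f) \<longleftrightarrow> enat (k + 1) < l \<and> sat l H T t (k + 1) f \<and> in_int (t (k + 1) - t k) I"
| "sat l H T t k (Until I f g) \<longleftrightarrow> (\<exists>j. k \<le> j \<and> enat j < l \<and> in_int (t j - t k) I \<and> sat l H T t j g \<and> (\<forall>i. k \<le> i \<and> i < j \<longrightarrow> sat l H T t i f))"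
| "sat l H T t k (Release I f g) \<longleftrightarrow> (\<forall>j. k \<le> j \<and> enat j < l \<longrightarrow> in_int (t j - t k) I \<longrightarrow> sat l H T t j g \<or> (\<exists>i. k \<le> i \<and> i < j \<and> sat l H T t i f))"

definition msat :: "'a htrace \<Rightarrow> nat \<Rightarrow> 'a mformula \<Rightarrow> bool" where
  "msat M k f = sat (len M) (hh M) (tt M) (tau M) k f"

definition MHT :: "'a mformula set \<Rightarrow> 'a htrace set" where
  "MHT \<Gamma> = {M. wf_trace M \<and> (\<forall>f\<in>\<Gamma>. msat M 0 f)}"

definition total :: "'a htrace \<Rightarrow> bool" where
  "total M \<longleftrightarrow> (\<forall>i. enat i < len M \<longrightarrow> hh M i = tt M i)"

definition strictly_below :: "enat \<Rightarrow> (nat \<Rightarrow> 'a set) \<Rightarrow> (nat \<Rightarrow> 'a set) \<Rightarrow> bool" where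
  "strictly_below l H T \<longleftrightarrow> (\<forall>i. enat i < l \<longrightarrow> H i \<subseteq> T i) \<and> (\<exists>i. enat i < l \<and> H i \<noteq> T i)"

definition MEL :: "'a mformula set \<Rightarrow> 'a htrace set" where
  "MEL \<Gamma> = {M \<in> MHT \<Gamma>. total M \<and>
     \<not> (\<exists>H. strictly_below (len M) H (tt M) \<and> HTrace (len M) H (tt M) (tau M) \<in> MHT \<Gamma>)}"

definition strongly_equivalent :: "'a mformula set \<Rightarrow> 'a mformula set \<Rightarrow> bool" where
  "strongly_equivalent \<Gamma>1 \<Gamma>2 \<longleftrightarrow> (\<forall>\<Delta>. MEL (\<Gamma>1 \<union> \<Delta>) = MEL (\<Gamma>2 \<union> \<Delta>))"

end

theory Submission
  imports Defs
begin

primrec nxt :: "nat \<Rightarrow> 'a mformula \<Rightarrow> 'a mformula" where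
  "nxt 0 f = f"
| "nxt (Suc n) f = Next (0, \<infinity>) (nxt n f)"

lemma in_int_all: "in_int d (0, \<infinity>)"
  by (simp add: in_int_def)

lemma sat_nxt:
  assumes "enat k < l"
  shows "sat l H T t k (nxt n f) \<longleftrightarrow> enat (k + n) < l \<and> sat l H T t (k + n) f"
  using assms
proof (induction n arbitrary: k)
  case 0
  then show ?case by simp
next
  case (Suc n)
  show ?case
  proof (cases "enat (k + 1) < l")
    case True
    then show ?thesis using Suc.IH[of "k+1"] by (simp add: in_int_all)
  next
    case False
    then show ?thesis
      by (simp add: in_int_all) (metis add_Suc_right enat_ord_simps(2) le_add1 le_less_trans not_le order_le_less_trans plus_1_eq_Suc add.commute Suc_le_eq)
  qed
qed

lemma sat_nxt0:
  assumes "0 < l"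
  shows "sat l H T t 0 (nxt n f) \<longleftrightarrow> enat n < l \<and> sat l H T t n f"
  using sat_nxt[of 0 l H T t n f] assms by (simp add: zero_enat_def)

lemma enat_lt_trans: "i \<le> k \<Longrightarrow> enat k < l \<Longrightarrow> enat i < l"
  using enat_ord_simps(1) order_le_less_trans by blast

lemma persist:
  assumes "\<forall>i. enat i < l \<longrightarrow> H i \<subseteq> T i" "enat k < l" "sat l H T t k f"
  shows "sat l T T t k f"
  using assms(2,3)
proof (induction f arbitrary: k)
  case (Atom x)
  then show ?case using assms(1) by auto
next
  case (Prev I f)
  then show ?case using enat_lt_trans[of "k-1" k l] by auto
next
  case (Since I f g)
  then show ?case using enat_lt_trans by (simp; meson)
next
  case (Trigger I f g)
  then show ?case using enat_lt_trans by (simp; meson)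
next
  case (Until I f g)
  then show ?case using enat_lt_trans
    by simp (metis enat_ord_simps(2) less_imp_le order_le_less_trans enat_ord_simps(1))
next
  case (Release I f g)
  then show ?case using enat_lt_trans
    by simp (metis enat_ord_simps(2) less_imp_le order_le_less_trans enat_ord_simps(1))
qed auto

lemma congr:
  assumes "\<forall>i. enat i < l \<longrightarrow> H i = H' i" "enat k < l"
  shows "sat l H T t k f = sat l H' T t k f"
  using assms(2)
proof (induction f arbitrary: k)
  case (Atom x)
  then show ?case using assms(1) by auto
next
  case (Prev I f)
  then show ?case using enat_lt_trans[of "k-1" k l] by auto
next
  case (Since I f g)
  then show ?case using enat_lt_trans by (simp; meson)
next
  case (Trigger I f g)
  then show ?case using enat_lt_trans by (simp; meson)
next
  case (Until I f g)
  then show ?case using enat_lt_trans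
    by simp (metis enat_ord_simps(2) less_imp_le order_le_less_trans enat_ord_simps(1))
next
  case (Release I f g)
  then show ?case using enat_lt_trans
    by simp (metis enat_ord_simps(2) less_imp_le order_le_less_trans enat_ord_simps(1))
qed auto


lemma sat0_congr:
  assumes "\<forall>i. enat i < l \<longrightarrow> H i = H' i" "0 < l"
  shows "sat l H T t 0 f = sat l H' T t 0 f"
  using congr[OF assms(1), of 0] assms(2) by (simp add: zero_enat_def)

lemma one_dir:
  assumes se: "strongly_equivalent G1 G2" and M1: "M \<in> MHT G1"
  shows "M \<in> MHT G2"
proof (rule ccontr)
  assume nM2: "M \<notin> MHT G2"
  obtain l H T t where Mdef: "M = HTrace l H T t" by (cases M)
  have wf: "wf_trace M" using M1 by (simp add: MHT_def)
  hence l0: "0 < l" and HT: "\<forall>i. enat i < l \<longrightarrow> H i \<subseteq> T i" and t0: "t 0 = 0"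
    and tinc: "\<forall>i. enat (Suc i) < l \<longrightarrow> t i < t (Suc i)"
    by (auto simp: wf_trace_def Mdef)
  have l0': "enat 0 < l" using l0 by (simp add: zero_enat_def)
  define MT where "MT = HTrace l T T t"
  have wfT: "wf_trace MT" using wf by (simp add: wf_trace_def MT_def Mdef)
  have wfH: "wf_trace (HTrace l H' T t)" if "strictly_below l H' T" for H'
    using wf that by (simp add: wf_trace_def strictly_below_def Mdef)
  have G1T: "\<forall>f\<in>G1. msat MT 0 f"
    using M1 persist[OF HT l0'] by (auto simp: MHT_def msat_def MT_def Mdef)
  have totT: "total MT" by (simp add: total_def MT_def)
  show False
  proof (cases "MT \<in> MHT G2")
    case False
    define D :: "'a mformula set" where "D = {nxt i (Atom p) | i p. enat i < l \<and> p \<in> T i}"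
    have "MT \<in> MEL (G1 \<union> D)"
      unfolding MEL_def
    proof (intro CollectI conjI)
      show "MT \<in> MHT (G1 \<union> D)" using wfT G1T
        by (auto simp: MHT_def D_def msat_def MT_def sat_nxt0[OF l0])
      show "total MT" by fact
      show "\<not> (\<exists>H'. strictly_below (len MT) H' (tt MT) \<and> HTrace (len MT) H' (tt MT) (tau MT) \<in> MHT (G1 \<union> D))"
      proof
        assume "\<exists>H'. strictly_below (len MT) H' (tt MT) \<and> HTrace (len MT) H' (tt MT) (tau MT) \<in> MHT (G1 \<union> D)"
        then obtain H' where sb: "strictly_below l H' T" and inm: "HTrace l H' T t \<in> MHT (G1 \<union> D)"
          by (auto simp: MT_def)
        have "\<forall>i. enat i < l \<longrightarrow> T i \<subseteq> H' i"
        proof (intro allI impI subsetI)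
          fix i p assume "enat i < l" "p \<in> T i"
          hence "nxt i (Atom p) \<in> D" by (auto simp: D_def)
          hence "sat l H' T t 0 (nxt i (Atom p))" using inm by (auto simp: MHT_def msat_def)
          thus "p \<in> H' i" by (simp add: sat_nxt0[OF l0])
        qed
        thus False using sb by (auto simp: strictly_below_def)
      qed
    qed
    hence "MT \<in> MEL (G2 \<union> D)" using se by (simp add: strongly_equivalent_def)
    hence "MT \<in> MHT G2" by (auto simp: MEL_def MHT_def)
    then show False using False by simp
  next
    case True
    have sbH: "strictly_below l H T"
    proof -
      have "\<exists>i. enat i < l \<and> H i \<noteq> T i"
      proof (rule ccontr)
        assume "\<not> ?thesis"
        hence "\<forall>i. enat i < l \<longrightarrow> H i = T i" by auto
        hence "M \<in> MHT G2" using True wf sat0_congr[OF _ l0, of H T]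
          by (auto simp: MHT_def msat_def MT_def Mdef)
        thus False using nM2 by simp
      qed
      thus ?thesis using HT by (simp add: strictly_below_def)
    qed
    define D :: "'a mformula set" where "D = {nxt i (Atom p) | i p. enat i < l \<and> p \<in> H i}
       \<union> {Impl (nxt i (Atom p)) (nxt j (Atom q)) | i j p q. enat i < l \<and> enat j < l \<and> p \<in> T i - H i \<and> q \<in> T j - H j}"
    have MD: "M \<in> MHT (G1 \<union> D)"
      using M1 by (auto simp: MHT_def D_def msat_def Mdef sat_nxt0[OF l0])
    have "MT \<notin> MEL (G1 \<union> D)"
      using MD sbH by (auto simp: MEL_def MT_def Mdef)
    moreover have "MT \<in> MEL (G2 \<union> D)"
      unfolding MEL_def
    proof (intro CollectI conjI)
      show "MT \<in> MHT (G2 \<union> D)" using True HT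
        by (auto simp: MHT_def D_def msat_def MT_def sat_nxt0[OF l0]) blast
      show "total MT" by fact
      show "\<not> (\<exists>H'. strictly_below (len MT) H' (tt MT) \<and> HTrace (len MT) H' (tt MT) (tau MT) \<in> MHT (G2 \<union> D))"
      proof
        assume "\<exists>H'. strictly_below (len MT) H' (tt MT) \<and> HTrace (len MT) H' (tt MT) (tau MT) \<in> MHT (G2 \<union> D)"
        then obtain H' where sb: "strictly_below l H' T" and inm: "HTrace l H' T t \<in> MHT (G2 \<union> D)"
          by (auto simp: MT_def)
        have HH': "\<forall>i. enat i < l \<longrightarrow> H i \<subseteq> H' i"
        proof (intro allI impI subsetI)
          fix i p assume "enat i < l" "p \<in> H i"
          hence "nxt i (Atom p) \<in> D" by (auto simp: D_def)
          hence "sat l H' T t 0 (nxt i (Atom p))" using inm by (auto simp: MHT_def msat_def)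
          thus "p \<in> H' i" by (simp add: sat_nxt0[OF l0])
        qed
        show False
        proof (cases "\<forall>i. enat i < l \<longrightarrow> H' i \<subseteq> H i")
          case True
          hence "\<forall>i. enat i < l \<longrightarrow> H i = H' i" using HH' by blast
          hence "M \<in> MHT G2" using inm wf sat0_congr[OF _ l0, of H H' T t]
            by (auto simp: MHT_def msat_def Mdef)
          thus False using nM2 by simp
        next
          case False
          then obtain j q where j: "enat j < l" "q \<in> H' j" "q \<notin> H j" by auto
          have qT: "q \<in> T j" using j sb by (auto simp: strictly_below_def)
          have "\<forall>i. enat i < l \<longrightarrow> T i \<subseteq> H' i"
          proof (intro allI impI subsetI)
            fix i p assume i: "enat i < l" "p \<in> T i"
            show "p \<in> H' i"
            proof (cases "p \<in> H i")
              case True thus ?thesis using HH' i by auto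
            next
              case False
              hence "Impl (nxt j (Atom q)) (nxt i (Atom p)) \<in> D" using i j qT
                unfolding D_def by blast
              hence "sat l H' T t 0 (Impl (nxt j (Atom q)) (nxt i (Atom p)))" using inm unfolding MHT_def msat_def by (auto simp del: sat.simps)
              thus "p \<in> H' i" using j by (simp add: sat_nxt0[OF l0])
            qed
          qed
          thus False using sb by (auto simp: strictly_below_def)
        qed
      qed
    qed
    ultimately show False using se by (simp add: strongly_equivalent_def)
  qed
qed

theorem theorem4:
  fixes \<Gamma>1 \<Gamma>2 :: "('a::finite) mformula set"
  shows "strongly_equivalent \<Gamma>1 \<Gamma>2 \<longleftrightarrow> MHT \<Gamma>1 = MHT \<Gamma>2"
proof
  assume se: "strongly_equivalent \<Gamma>1 \<Gamma>2"
  hence se2: "strongly_equivalent \<Gamma>2 \<Gamma>1" by (simp add: strongly_equivalent_def)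
  show "MHT \<Gamma>1 = MHT \<Gamma>2" using one_dir[OF se] one_dir[OF se2] by blast
next
  assume eq: "MHT \<Gamma>1 = MHT \<Gamma>2"
  have "MHT (\<Gamma>1 \<union> D) = MHT (\<Gamma>2 \<union> D)" for D
    using eq unfolding MHT_def set_eq_iff by auto
  thus "strongly_equivalent \<Gamma>1 \<Gamma>2"
    by (simp add: strongly_equivalent_def MEL_def)
qed

end
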